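(* For every $\lambda\in P^+$, $\mathrm{Stab}_{\mathcal W}(\lambda):=\{w\in\mathcal W:w(\lambda)=\lambda\}$ equals the submonoid of $\mathcal W$ generated by those $r_i$, $i\in I$, with $\alpha_i^\vee(\lambda)=0$.
   Context: $I$ countable, $A=(a_{ij})$ a Borcherds–Cartan matrix ($a_{ii}=2$ or $a_{ii}\in\mathbb Z_{\le 0}$; $a_{ij}\in\mathbb Z_{\le0}$ for $i\ne j$; $a_{ij}=0\iff a_{ji}=0$), $I^{re}=\{a_{ii}=2\}$, $I^{im}=I\setminus I^{re}$. Datum $(A,\{\alpha_i\},\{\alpha_i^\vee\},P,P^\vee)$: $P^\vee$ free $\mathbb Z$-module, $P=\mathrm{Hom}(P^\vee,\mathbb Z)$, $\mathfrak h=P^\vee\otimes\mathbb C$, $\alpha_i^\vee(\alpha_j)=a_{ij}$, $\{\alpha_i^\vee\}$ and $\{\alpha_i\}$ linearly independent; $P^+=\{\lambda\in P:\alpha_i^\vee(\lambda)\ge0\ \forall i\}$. $r_i(\mu)=\mu-\alpha_i^\vee(\mu)\alpha_i$. The monoid $\mathcal W$ is generated by $r_i$ ($i\in I$) with relations $r_i^2=1$ ($i\in I^{re}$), $(r_ir_j)^m=(r_jr_i)^m=1$ for $i\neq j\in I^{re}$ when $r_ir_j\in GL(\mathfrak h^* )$ has order $m\in\{2,3,4,6\}$, and $r_ir_j=r_jr_i$ for $i\in I^{im}$, $j\in I\setminus\{i\}$ with $a_{ij}=0$; it acts on $\mathfrak h^*$ via $r_i\mapsto r_i$. *)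

theory Defs
  imports Complex_Main "HOL-Library.Countable"
begin

text \<open>The free Z-module P^vee is modelled as the finitely supported
functions 'b => int (basis indexed by 'b); P = Hom(P^vee, Z) = 'b => int;
h = P^vee (x) C = finitely supported 'b => complex; h^* = Hom(h, C) = 'b => complex.
Coroots cor i :: 'b => int (finitely supported), roots rt i :: 'b => int.\<close>

definition pairZ :: "('b \<Rightarrow> int) \<Rightarrow> ('b \<Rightarrow> int) \<Rightarrow> int" where
  "pairZ h \<mu> = (\<Sum>b\<in>{b. h b \<noteq> 0}. h b * \<mu> b)"

definition pairC :: "('b \<Rightarrow> int) \<Rightarrow> ('b \<Rightarrow> complex) \<Rightarrow> complex" where
  "pairC h \<mu> = (\<Sum>b\<in>{b. h b \<noteq> 0}. of_int (h b) * \<mu> b)"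

definition BC_matrix :: "('i \<Rightarrow> 'i \<Rightarrow> int) \<Rightarrow> bool" where
  "BC_matrix A \<longleftrightarrow>
     (\<forall>i. A i i = 2 \<or> A i i \<le> 0) \<and>
     (\<forall>i j. i \<noteq> j \<longrightarrow> A i j \<le> 0) \<and>
     (\<forall>i j. A i j = 0 \<longleftrightarrow> A j i = 0)"

definition lin_indep_C :: "('i \<Rightarrow> 'b \<Rightarrow> int) \<Rightarrow> bool" where
  "lin_indep_C v \<longleftrightarrow>
     (\<forall>S (c :: 'i \<Rightarrow> complex). finite S \<longrightarrow>
        (\<forall>b. (\<Sum>i\<in>S. c i * of_int (v i b)) = 0) \<longrightarrow> (\<forall>i\<in>S. c i = 0))"

definition is_datum :: "('i \<Rightarrow> 'i \<Rightarrow> int) \<Rightarrow> ('i \<Rightarrow> 'b \<Rightarrow> int) \<Rightarrow> ('i \<Rightarrow> 'b \<Rightarrow> int) \<Rightarrow> bool" where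
  "is_datum A cor rt \<longleftrightarrow>
     (\<forall>i. finite {b. cor i b \<noteq> 0}) \<and>
     (\<forall>i j. pairZ (cor i) (rt j) = A i j) \<and>
     lin_indep_C cor \<and> lin_indep_C rt"

definition refl_map :: "('i \<Rightarrow> 'b \<Rightarrow> int) \<Rightarrow> ('i \<Rightarrow> 'b \<Rightarrow> int) \<Rightarrow> 'i
    \<Rightarrow> ('b \<Rightarrow> complex) \<Rightarrow> ('b \<Rightarrow> complex)" where
  "refl_map cor rt i \<mu> = (\<lambda>b. \<mu> b - pairC (cor i) \<mu> * of_int (rt i b))"

text \<open>Action of a word [i1,...,ik] (representing r_i1 ... r_ik) on h^*.\<close>
fun word_act :: "('i \<Rightarrow> 'b \<Rightarrow> int) \<Rightarrow> ('i \<Rightarrow> 'b \<Rightarrow> int) \<Rightarrow> 'i list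
    \<Rightarrow> ('b \<Rightarrow> complex) \<Rightarrow> ('b \<Rightarrow> complex)" where
  "word_act cor rt [] \<mu> = \<mu>"
| "word_act cor rt (i # w) \<mu> = refl_map cor rt i (word_act cor rt w \<mu>)"

definition has_order :: "('i \<Rightarrow> 'b \<Rightarrow> int) \<Rightarrow> ('i \<Rightarrow> 'b \<Rightarrow> int) \<Rightarrow> 'i \<Rightarrow> 'i \<Rightarrow> nat \<Rightarrow> bool" where
  "has_order cor rt i j m \<longleftrightarrow> 0 < m \<and>
     (refl_map cor rt i \<circ> refl_map cor rt j) ^^ m = id \<and>
     (\<forall>k. 0 < k \<and> k < m \<longrightarrow> (refl_map cor rt i \<circ> refl_map cor rt j) ^^ k \<noteq> id)"

inductive W_rel :: "('i \<Rightarrow> 'i \<Rightarrow> int) \<Rightarrow> ('i \<Rightarrow> 'b \<Rightarrow> int) \<Rightarrow> ('i \<Rightarrow> 'b \<Rightarrow> int)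
    \<Rightarrow> 'i list \<Rightarrow> 'i list \<Rightarrow> bool" for A cor rt where
  sq: "A i i = 2 \<Longrightarrow> W_rel A cor rt [i, i] []"
| braid1: "\<lbrakk>i \<noteq> j; A i i = 2; A j j = 2; m \<in> {2,3,4,6}; has_order cor rt i j m\<rbrakk>
      \<Longrightarrow> W_rel A cor rt (concat (replicate m [i, j])) []"
| braid2: "\<lbrakk>i \<noteq> j; A i i = 2; A j j = 2; m \<in> {2,3,4,6}; has_order cor rt i j m\<rbrakk>
      \<Longrightarrow> W_rel A cor rt (concat (replicate m [j, i])) []"
| comm: "\<lbrakk>A i i \<noteq> 2; j \<noteq> i; A i j = 0\<rbrakk> \<Longrightarrow> W_rel A cor rt [i, j] [j, i]"

text \<open>Monoid congruence on words generated by W_rel; W = words / W_eq.\<close>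
inductive W_eq :: "('i \<Rightarrow> 'i \<Rightarrow> int) \<Rightarrow> ('i \<Rightarrow> 'b \<Rightarrow> int) \<Rightarrow> ('i \<Rightarrow> 'b \<Rightarrow> int)
    \<Rightarrow> 'i list \<Rightarrow> 'i list \<Rightarrow> bool" for A cor rt where
  base: "W_rel A cor rt u v \<Longrightarrow> W_eq A cor rt (x @ u @ y) (x @ v @ y)"
| refl: "W_eq A cor rt u u"
| sym: "W_eq A cor rt u v \<Longrightarrow> W_eq A cor rt v u"
| trans: "W_eq A cor rt u v \<Longrightarrow> W_eq A cor rt v w \<Longrightarrow> W_eq A cor rt u w"

end

theory Submission
  imports Defs "HOL-Library.Countable"
begin


lemma pairZ_diff: "pairZ h (\<lambda>b. f b - g b) = pairZ h f - pairZ h g"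
  by (simp add: pairZ_def sum_subtractf algebra_simps)
lemma pairZ_scale: "pairZ h (\<lambda>b. c * f b) = c * pairZ h f"
  by (simp add: pairZ_def sum_distrib_left algebra_simps)
lemma pairC_diff: "pairC h (\<lambda>b. f b - g b) = pairC h f - pairC h g"
  by (simp add: pairC_def sum_subtractf algebra_simps)
lemma pairC_scale: "pairC h (\<lambda>b. c * f b) = c * pairC h f"
  by (simp add: pairC_def sum_distrib_left algebra_simps)
lemma pairC_add: "pairC h (\<lambda>b. f b + g b) = pairC h f + pairC h g"
  by (simp add: pairC_def sum.distrib algebra_simps)
lemma pairC_of_int: "pairC h (of_int \<circ> \<mu>) = of_int (pairZ h \<mu>)"
  by (simp add: pairC_def pairZ_def)

lemma W_eq_cong: "W_eq A cor rt u v \<Longrightarrow> W_eq A cor rt (x@u@y) (x@v@y)"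
proof (induction arbitrary: x y rule: W_eq.induct)
  case (base u v x' y')
  then show ?case using W_eq.base[of A cor rt u v "x@x'" "y'@y"] by simp
next
  case (refl u) then show ?case by (rule W_eq.refl)
next
  case (sym u v) then show ?case by (blast intro: W_eq.sym)
next
  case (trans u v w) then show ?case by (blast intro: W_eq.trans)
qed

lemma W_eq_cons: "W_eq A cor rt u v \<Longrightarrow> W_eq A cor rt (k#u) (k#v)"
  using W_eq_cong[of A cor rt u v "[k]" "[]"] by simp
lemma W_eq_app: "W_eq A cor rt u v \<Longrightarrow> W_eq A cor rt (x@u) (x@v)"
  using W_eq_cong[of A cor rt u v x "[]"] by simp
lemma W_eq_appr: "W_eq A cor rt u v \<Longrightarrow> W_eq A cor rt (u@y) (v@y)"
  using W_eq_cong[of A cor rt u v "[]" y] by simp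
lemma W_eq_rel: "W_rel A cor rt u v \<Longrightarrow> W_eq A cor rt u v"
  using W_eq.base[of A cor rt u v "[]" "[]"] by simp

lemma word_act_append: "word_act cor rt (x@y) \<mu> = word_act cor rt x (word_act cor rt y \<mu>)"
  by (induction x) auto

lemma word_act_rep: "word_act cor rt (concat (replicate m [i,j])) = (refl_map cor rt i \<circ> refl_map cor rt j) ^^ m"
proof (induction m)
  case 0 then show ?case by (auto simp: fun_eq_iff)
next
  case (Suc m)
  have "word_act cor rt (concat (replicate (Suc m) [i,j])) \<mu> = ((refl_map cor rt i \<circ> refl_map cor rt j) ^^ Suc m) \<mu>" for \<mu>
    using Suc by (simp add: word_act_append comp_def)
  then show ?case by (rule ext)
qed

locale BKM =
  fixes A :: "'i \<Rightarrow> 'i \<Rightarrow> int" and cor rt :: "'i \<Rightarrow> 'b \<Rightarrow> int" and lam :: "'b \<Rightarrow> int"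
  assumes BC: "BC_matrix A" and dat: "is_datum A cor rt" and dom: "\<forall>i. pairZ (cor i) lam \<ge> 0"
begin

lemma Apair: "pairZ (cor i) (rt j) = A i j" using dat by (simp add: is_datum_def)
lemma ApairC0: "pairC (cor i) (of_int \<circ> rt j) = of_int (A i j)" by (simp add: pairC_of_int Apair)
lemma ApairC: "pairC (cor i) (\<lambda>b. of_int (rt j b)) = of_int (A i j)" using ApairC0 by (simp add: o_def)

lemma pairC_refl: "pairC (cor j) (refl_map cor rt i \<mu>) = pairC (cor j) \<mu> - pairC (cor i) \<mu> * of_int (A j i)"
proof -
  have "refl_map cor rt i \<mu> = (\<lambda>b. \<mu> b - pairC (cor i) \<mu> * (of_int \<circ> rt i) b)"
    by (simp add: refl_map_def fun_eq_iff)
  then show ?thesis by (simp add: pairC_diff pairC_scale ApairC)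
qed

lemma refl_sq: "A i i = 2 \<Longrightarrow> refl_map cor rt i (refl_map cor rt i \<mu>) = \<mu>"
  by (simp add: refl_map_def [of _ _ i "refl_map cor rt i \<mu>"] pairC_refl fun_eq_iff)
     (simp add: refl_map_def algebra_simps)

lemma refl_comm: "A i j = 0 \<Longrightarrow> A j i = 0 \<Longrightarrow> refl_map cor rt i (refl_map cor rt j \<mu>) = refl_map cor rt j (refl_map cor rt i \<mu>)"
  by (simp add: refl_map_def [of _ _ i "refl_map cor rt j \<mu>"] refl_map_def [of _ _ j "refl_map cor rt i \<mu>"] pairC_refl fun_eq_iff)
     (simp add: refl_map_def algebra_simps)

lemma Asym0: "A i j = 0 \<longleftrightarrow> A j i = 0" using BC by (auto simp: BC_matrix_def)

lemma W_rel_sound: "W_rel A cor rt u v \<Longrightarrow> word_act cor rt u = word_act cor rt v"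
proof (induction rule: W_rel.induct)
  case (sq i) then show ?case by (simp add: fun_eq_iff refl_sq)
next
  case (braid1 i j m) then show ?case by (simp add: word_act_rep has_order_def)
next
  case (braid2 i j m)
  have "(refl_map cor rt i \<circ> refl_map cor rt j) ^^ m = id" using braid2 by (simp add: has_order_def)
  moreover have "(refl_map cor rt j \<circ> refl_map cor rt i) ^^ m = id"
  proof -
    have eq: "refl_map cor rt j \<circ> ((refl_map cor rt i \<circ> refl_map cor rt j) ^^ n) = ((refl_map cor rt j \<circ> refl_map cor rt i) ^^ n) \<circ> refl_map cor rt j" for n
      by (induction n) (auto simp: fun_eq_iff funpow_Suc_right simp del: funpow.simps)
    have "((refl_map cor rt j \<circ> refl_map cor rt i) ^^ m) \<circ> refl_map cor rt j = refl_map cor rt j"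
      using eq[of m] \<open>(refl_map cor rt i \<circ> refl_map cor rt j) ^^ m = id\<close> by simp
    then have "((refl_map cor rt j \<circ> refl_map cor rt i) ^^ m) \<circ> (refl_map cor rt j \<circ> refl_map cor rt j) = refl_map cor rt j \<circ> refl_map cor rt j"
      by (metis comp_assoc)
    moreover have "refl_map cor rt j \<circ> refl_map cor rt j = id" using braid2 by (simp add: fun_eq_iff refl_sq)
    ultimately show ?thesis by simp
  qed
  ultimately show ?case by (simp add: word_act_rep)
next
  case (comm i j) then show ?case by (simp add: fun_eq_iff refl_comm Asym0)
qed

lemma W_eq_sound: "W_eq A cor rt u v \<Longrightarrow> word_act cor rt u = word_act cor rt v"
proof (induction rule: W_eq.induct)
  case (base u v x y)
  then have "word_act cor rt u = word_act cor rt v" by (rule W_rel_sound)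
  then show ?case by (intro ext) (simp add: word_act_append)
qed auto

end


definition rZ :: "('i \<Rightarrow> 'b \<Rightarrow> int) \<Rightarrow> ('i \<Rightarrow> 'b \<Rightarrow> int) \<Rightarrow> 'i \<Rightarrow> ('b \<Rightarrow> int) \<Rightarrow> ('b \<Rightarrow> int)" where
  "rZ cor rt i \<mu> = (\<lambda>b. \<mu> b - pairZ (cor i) \<mu> * rt i b)"

fun wZ :: "('i \<Rightarrow> 'b \<Rightarrow> int) \<Rightarrow> ('i \<Rightarrow> 'b \<Rightarrow> int) \<Rightarrow> 'i list \<Rightarrow> ('b \<Rightarrow> int) \<Rightarrow> ('b \<Rightarrow> int)" where
  "wZ cor rt [] \<mu> = \<mu>"
| "wZ cor rt (i # w) \<mu> = rZ cor rt i (wZ cor rt w \<mu>)"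

lemma wZ_append: "wZ cor rt (x@y) \<mu> = wZ cor rt x (wZ cor rt y \<mu>)"
  by (induction x) auto

lemma refl_ofint: "refl_map cor rt i (of_int \<circ> \<nu>) = of_int \<circ> rZ cor rt i \<nu>"
  by (simp add: refl_map_def rZ_def fun_eq_iff pairC_of_int)

lemma word_act_ofint: "word_act cor rt w (of_int \<circ> \<mu>) = of_int \<circ> wZ cor rt w \<mu>"
proof (induction w)
  case Nil then show ?case by simp
next
  case (Cons a w)
  have "word_act cor rt (a#w) (of_int \<circ> \<mu>) = refl_map cor rt a (word_act cor rt w (of_int \<circ> \<mu>))" by simp
  also have "\<dots> = refl_map cor rt a (of_int \<circ> wZ cor rt w \<mu>)" by (simp only: Cons.IH)
  also have "\<dots> = of_int \<circ> rZ cor rt a (wZ cor rt w \<mu>)" by (rule refl_ofint)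
  finally show ?case by (simp only: wZ.simps)
qed

definition dsum :: "('i \<Rightarrow> 'b \<Rightarrow> int) \<Rightarrow> (int \<times> 'i) list \<Rightarrow> 'b \<Rightarrow> int" where
  "dsum rt xs b = sum_list (map (\<lambda>p. fst p * rt (snd p) b) xs)"

definition nx :: "(int \<times> 'i) list \<Rightarrow> 'i \<Rightarrow> int" where
  "nx xs j = sum_list (map fst (filter (\<lambda>p. snd p = j) xs))"

lemma dsum_group: "finite T \<Longrightarrow> set (map snd xs) \<subseteq> T \<Longrightarrow> dsum rt xs b = (\<Sum>j\<in>T. nx xs j * rt j b)"
proof (induction xs)
  case Nil then show ?case by (simp add: dsum_def nx_def)
next
  case (Cons p xs)
  obtain c j0 where p: "p = (c, j0)" by (cases p)
  have j0: "j0 \<in> T" using Cons.prems p by auto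
  have 1: "dsum rt (p#xs) b = c * rt j0 b + dsum rt xs b" by (simp add: dsum_def p)
  have 2: "dsum rt xs b = (\<Sum>j\<in>T. nx xs j * rt j b)" using Cons by auto
  have 3: "(\<Sum>j\<in>T. nx (p#xs) j * rt j b) = (\<Sum>j\<in>T. nx xs j * rt j b + (if j = j0 then c * rt j0 b else 0))"
    by (rule sum.cong) (auto simp: nx_def p algebra_simps)
  have 4: "(\<Sum>j\<in>T. nx xs j * rt j b + (if j = j0 then c * rt j0 b else 0)) = (\<Sum>j\<in>T. nx xs j * rt j b) + c * rt j0 b"
    by (simp add: sum.distrib j0 Cons.prems(1))
  show ?case using 1 2 3 4 by simp
qed

lemma pairZ_dsum: "pairZ h (dsum rt xs) = sum_list (map (\<lambda>p. fst p * pairZ h (rt (snd p))) xs)"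
proof (induction xs)
  case Nil then show ?case by (simp add: dsum_def pairZ_def)
next
  case (Cons p xs)
  have e: "dsum rt (p#xs) = (\<lambda>b. fst p * rt (snd p) b - (- dsum rt xs b))" by (simp add: dsum_def fun_eq_iff)
  have e2: "pairZ h (\<lambda>b. - dsum rt xs b) = - pairZ h (dsum rt xs)"
    using pairZ_scale[of h "-1" "dsum rt xs"] by simp
  show ?case unfolding e pairZ_diff pairZ_scale e2 using Cons by simp
qed

context BKM begin

abbreviation "r i \<equiv> rZ cor rt i"
abbreviation "act w \<equiv> wZ cor rt w"
abbreviation "pr i \<mu> \<equiv> pairZ (cor i) \<mu>"

lemma pr_r: "pr j (r i \<mu>) = pr j \<mu> - pr i \<mu> * A j i"
proof -
  have "r i \<mu> = (\<lambda>b. \<mu> b - pr i \<mu> * rt i b)" by (simp add: rZ_def)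
  then show ?thesis by (simp add: pairZ_diff pairZ_scale Apair)
qed

lemma act_sound: "W_eq A cor rt u v \<Longrightarrow> act u \<mu> = act v \<mu>"
proof -
  assume "W_eq A cor rt u v"
  then have "word_act cor rt u (of_int \<circ> \<mu>) = word_act cor rt v (of_int \<circ> \<mu>)" using W_eq_sound by simp
  then have "(of_int \<circ> act u \<mu> :: 'b \<Rightarrow> complex) = of_int \<circ> act v \<mu>" by (simp add: word_act_ofint)
  then show ?thesis by (auto simp: fun_eq_iff)
qed

definition below :: "('b \<Rightarrow> int) \<Rightarrow> bool" where
  "below \<mu> \<longleftrightarrow> (\<exists>xs. (\<forall>p\<in>set xs. 0 \<le> fst p) \<and> \<mu> = (\<lambda>b. lam b - dsum rt xs b))"

lemma below_lam: "below lam" unfolding below_def by (rule exI[of _ "[]"]) (simp add: dsum_def)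

lemma Aoff: "i \<noteq> j \<Longrightarrow> A i j \<le> 0" using BC by (auto simp: BC_matrix_def)
lemma Aim: "A i i \<noteq> 2 \<Longrightarrow> A i i \<le> 0" using BC by (auto simp: BC_matrix_def)

lemma below_im: assumes "below \<mu>" "A k k \<noteq> 2" shows "pr k \<mu> \<ge> pr k lam"
proof -
  obtain xs where xs: "\<forall>p\<in>set xs. 0 \<le> fst p" "\<mu> = (\<lambda>b. lam b - dsum rt xs b)" using assms unfolding below_def by blast
  have "pr k \<mu> = pr k lam - sum_list (map (\<lambda>p. fst p * A k (snd p)) xs)"
    using xs(2) by (simp add: pairZ_diff pairZ_dsum Apair)
  moreover have "sum_list (map (\<lambda>p. fst p * A k (snd p)) xs) \<le> 0"
  proof (rule sum_list_nonpos)
    fix x assume "x \<in> set (map (\<lambda>p. fst p * A k (snd p)) xs)"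
    then obtain p where p: "p \<in> set xs" "x = fst p * A k (snd p)" by auto
    have "A k (snd p) \<le> 0" using Aoff Aim assms(2) by (cases "k = snd p") auto
    then show "x \<le> 0" using p xs(1) by (simp add: mult_nonneg_nonpos)
  qed
  ultimately show ?thesis by simp
qed

lemma below_im0: "below \<mu> \<Longrightarrow> A k k \<noteq> 2 \<Longrightarrow> pr k \<mu> \<ge> 0"
  using below_im dom by (meson order_trans)

lemma below_step: assumes "below \<mu>" "pr k \<mu> \<ge> 0" shows "below (r k \<mu>)"
proof -
  obtain xs where xs: "\<forall>p\<in>set xs. 0 \<le> fst p" "\<mu> = (\<lambda>b. lam b - dsum rt xs b)" using assms unfolding below_def by blast
  show ?thesis unfolding below_def
    apply (rule exI[of _ "(pr k \<mu>, k) # xs"])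
    using xs assms(2) by (auto simp: rZ_def dsum_def fun_eq_iff)
qed

lemma dsum_zero: assumes "\<forall>p\<in>set xs. 0 \<le> fst p" "\<forall>b. dsum rt xs b = 0" shows "\<forall>p\<in>set xs. fst p = 0"
proof -
  define T where "T = set (map snd xs)"
  have fin: "finite T" by (simp add: T_def)
  have li: "lin_indep_C rt" using dat by (simp add: is_datum_def)
  have "\<forall>b. (\<Sum>j\<in>T. of_int (nx xs j) * (of_int (rt j b) :: complex)) = 0"
  proof
    fix b
    have "(\<Sum>j\<in>T. of_int (nx xs j) * (of_int (rt j b) :: complex)) = of_int (\<Sum>j\<in>T. nx xs j * rt j b)" by simp
    also have "(\<Sum>j\<in>T. nx xs j * rt j b) = dsum rt xs b" using dsum_group[OF fin, of xs rt b] by (simp add: T_def)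
    finally show "(\<Sum>j\<in>T. of_int (nx xs j) * (of_int (rt j b) :: complex)) = 0" using assms(2) by simp
  qed
  then have "\<forall>j\<in>T. (of_int (nx xs j) :: complex) = 0"
    using li[unfolded lin_indep_C_def, rule_format, of T "\<lambda>j. of_int (nx xs j)"] fin by blast
  then have nz: "\<forall>j\<in>T. nx xs j = 0" by simp
  show ?thesis
  proof
    fix p assume p: "p \<in> set xs"
    have "snd p \<in> T" using p T_def by auto
    then have "nx xs (snd p) = 0" using nz by auto
    then have "\<forall>x\<in>set (map fst (filter (\<lambda>q. snd q = snd p) xs)). x = 0"
      unfolding nx_def using assms(1) by (subst (asm) sum_list_nonneg_eq_0_iff) auto
    then show "fst p = 0" using p by auto
  qed
qed

lemma below_fix: assumes "below \<mu>" "pr k \<mu> \<ge> 0" "r k \<mu> = lam" shows "pr k \<mu> = 0" "\<mu> = lam"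
proof -
  obtain xs where xs: "\<forall>p\<in>set xs. 0 \<le> fst p" "\<mu> = (\<lambda>b. lam b - dsum rt xs b)" using assms unfolding below_def by blast
  define c where "c = pr k \<mu>"
  let ?ys = "(c, k) # xs"
  have "\<forall>b. dsum rt ?ys b = 0"
  proof
    fix b
    have "lam b = \<mu> b - c * rt k b" using assms(3) unfolding rZ_def c_def by (metis)
    moreover have "\<mu> b = lam b - dsum rt xs b" using xs(2) by simp
    ultimately show "dsum rt ?ys b = 0" by (simp add: dsum_def)
  qed
  then have "\<forall>p\<in>set ?ys. fst p = 0" using dsum_zero[of ?ys] xs(1) assms(2) c_def by auto
  then show "pr k \<mu> = 0" using c_def by auto
  then show "\<mu> = lam" using assms(3) by (simp add: rZ_def fun_eq_iff)
qed

end


fun alt :: "'i \<Rightarrow> 'i \<Rightarrow> nat \<Rightarrow> 'i list" where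
  "alt s t 0 = []"
| "alt s t (Suc n) = s # alt t s n"

lemma alt_len[simp]: "length (alt s t n) = n" by (induction n arbitrary: s t) auto
lemma alt_set: "set (alt s t n) \<subseteq> {s,t}" by (induction n arbitrary: s t) auto

lemma alt_Suc_right: "alt s t (Suc n) = alt s t n @ [if even n then s else t]"
  by (induction n arbitrary: s t) auto

lemma alt_add: "alt s t (n + n') = alt s t n @ (if even n then alt s t n' else alt t s n')"
  by (induction n arbitrary: s t) auto

lemma rev_alt: "rev (alt s t n) = (if odd n then alt s t n else alt t s n)"
proof (induction n arbitrary: s t)
  case 0 then show ?case by simp
next
  case (Suc n)
  have "rev (alt s t (Suc n)) = rev (alt t s n) @ [s]" by simp
  also have "\<dots> = (if odd n then alt t s n else alt s t n) @ [s]" using Suc by simp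
  finally have e: "rev (alt s t (Suc n)) = (if odd n then alt t s n else alt s t n) @ [s]" .
  show ?case
  proof (cases "even n")
    case True
    have "alt s t (Suc n) = alt s t n @ [s]" using True by (simp only: alt_Suc_right) simp
    then show ?thesis using e True by simp
  next
    case False
    have "alt t s (Suc n) = alt t s n @ [s]" using False by (simp only: alt_Suc_right) simp
    then show ?thesis using e False by simp
  qed
qed

lemma concat_rep_alt: "concat (replicate m [s,t]) = alt s t (2*m)"
  by (induction m) auto

fun pq :: "int \<Rightarrow> int \<Rightarrow> nat \<Rightarrow> int \<times> int" where
  "pq a b 0 = (1, 0)"
| "pq a b (Suc L) = (let (p,q) = pq a b L in if even L then (p, -q - p*a) else (-p - q*b, q))"

lemma pq_pos4: assumes "a \<le> 0" "b \<le> 0" "a*b \<ge> 4"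
  shows "0 \<le> fst (pq a b L) \<and> 0 \<le> snd (pq a b L) \<and>
         (if even L then -a * fst (pq a b L) \<ge> 2 * snd (pq a b L) else -b * snd (pq a b L) \<ge> 2 * fst (pq a b L))"
proof (induction L)
  case 0 then show ?case using assms by simp
next
  case (Suc L)
  obtain p q where pqL: "pq a b L = (p,q)" by (cases "pq a b L")
  show ?case
  proof (cases "even L")
    case True
    then have h: "0 \<le> p" "0 \<le> q" "-a*p \<ge> 2*q" using Suc pqL by auto
    have q': "-a*p - q \<ge> q" using h by simp
    have "-b * (-a*p - q) \<ge> 2*p"
    proof -
      have "-b*(2*q) \<le> -b*(-a*p)" using h(3) assms(2) by (intro mult_left_mono) auto
      moreover have "a*b*p \<ge> 4*p" using assms(3) h(1) by (intro mult_right_mono) auto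
      ultimately show ?thesis by (simp add: algebra_simps)
    qed
    then show ?thesis using True pqL h q' by (auto simp: algebra_simps)
  next
    case False
    then have h: "0 \<le> p" "0 \<le> q" "-b*q \<ge> 2*p" using Suc pqL by auto
    have p': "-b*q - p \<ge> p" using h by simp
    have "-a * (-b*q - p) \<ge> 2*q"
    proof -
      have "-a*(2*p) \<le> -a*(-b*q)" using h(3) assms(1) by (intro mult_left_mono) auto
      moreover have "a*b*q \<ge> 4*q" using assms(3) h(2) by (intro mult_right_mono) auto
      ultimately show ?thesis by (simp add: algebra_simps)
    qed
    then show ?thesis using False pqL h p' by (auto simp: algebra_simps)
  qed
qed

definition mp :: "int \<Rightarrow> nat" where
  "mp n = (if n = 0 then 2 else if n = 1 then 3 else if n = 2 then 4 else 6)"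

lemma small_cases: fixes a b :: int assumes "a \<le> 0" "b \<le> 0" "a*b < 4" "a = 0 \<longleftrightarrow> b = 0"
  shows "(a,b) \<in> {(0,0),(-1,-1),(-1,-2),(-2,-1),(-1,-3),(-3,-1)}"
proof (cases "a = 0")
  case True then show ?thesis using assms by auto
next
  case False
  then have "a \<le> -1" "b \<le> -1" using assms by auto
  have "a*(-1) \<le> a*b" using \<open>b \<le> -1\<close> \<open>a \<le> -1\<close> by (intro mult_left_mono_neg) auto
  then have "a*b \<ge> -a" by simp
  have "(-1)*b \<le> a*b" using \<open>b \<le> -1\<close> \<open>a \<le> -1\<close> by (intro mult_right_mono_neg) auto
  then have "a*b \<ge> -b" by simp
  then have "a \<ge> -3" "b \<ge> -3" using \<open>a*b \<ge> -a\<close> assms(3) by auto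
  then have "a \<in> {-3,-2,-1}" "b \<in> {-3,-2,-1}" using \<open>a \<le> -1\<close> \<open>b \<le> -1\<close> by auto
  then show ?thesis using assms(3) by auto
qed

lemma pq_small: fixes a b :: int assumes "a \<le> 0" "b \<le> 0" "a*b < 4" "a = 0 \<longleftrightarrow> b = 0" "L < mp (a*b)"
  shows "0 \<le> fst (pq a b L) \<and> 0 \<le> snd (pq a b L)"
proof -
  have L: "L < 6" using assms(5) by (auto simp: mp_def split: if_splits)
  have c: "(a,b) \<in> {(0,0),(-1,-1),(-1,-2),(-2,-1),(-1,-3),(-3,-1)}" using small_cases assms by blast
  have "L \<in> {0,1,2,3,4,5}" using L by auto
  then show ?thesis using c assms(5) by (auto simp: mp_def numeral_eq_Suc)
qed



definition stp :: "complex \<Rightarrow> complex \<Rightarrow> complex \<Rightarrow> complex \<Rightarrow> complex \<times> complex \<Rightarrow> complex \<times> complex" where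
  "stp X0 Y0 a b c = (let c2' = snd c + (Y0 - (fst c * b + snd c * 2)) in (fst c + (X0 - (fst c * 2 + c2' * a)), c2'))"

definition psp :: "complex \<Rightarrow> complex \<Rightarrow> complex \<times> complex \<Rightarrow> complex \<times> complex" where
  "psp a b P = (let X1 = fst P - snd P * a; Y1 = snd P - snd P * 2 in (X1 - X1 * 2, Y1 - X1 * b))"

context BKM begin

lemma alt_pair: assumes "A i i = 2" "A k k = 2"
  shows "pr i (act (alt k i L) \<nu>) = fst (pq (A i k) (A k i) L) * pr i \<nu> + snd (pq (A i k) (A k i) L) * pr k \<nu>"
proof (induction L arbitrary: \<nu>)
  case 0 then show ?case by (simp add: wZ_append)
next
  case (Suc L)
  obtain p q where pqL: "pq (A i k) (A k i) L = (p,q)" by (cases "pq (A i k) (A k i) L")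
  have e: "act (alt k i (Suc L)) \<nu> = act (alt k i L) (r (if even L then k else i) \<nu>)"
    by (simp only: alt_Suc_right wZ_append) simp
  show ?case
  proof (cases "even L")
    case True
    have "pr i (act (alt k i (Suc L)) \<nu>) = p * pr i (r k \<nu>) + q * pr k (r k \<nu>)" using e Suc pqL True by simp
    also have "\<dots> = p * pr i \<nu> + (-q - p * A i k) * pr k \<nu>" using assms by (simp add: pr_r algebra_simps)
    finally show ?thesis using pqL True by simp
  next
    case False
    have "pr i (act (alt k i (Suc L)) \<nu>) = p * pr i (r i \<nu>) + q * pr k (r i \<nu>)" using e Suc pqL False by simp
    also have "\<dots> = (-p - q * A k i) * pr i \<nu> + q * pr k \<nu>" using assms by (simp add: pr_r algebra_simps)
    finally show ?thesis using pqL False by simp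
  qed
qed

definition G :: "'i \<Rightarrow> 'i \<Rightarrow> ('b \<Rightarrow> complex) \<Rightarrow> complex \<Rightarrow> complex \<Rightarrow> ('b \<Rightarrow> complex)" where
  "G i k \<mu>0 c1 c2 = (\<lambda>b. \<mu>0 b - (c1 * of_int (rt i b) + c2 * of_int (rt k b)))"

lemma pair_G: "pairC (cor j) (G i k \<mu>0 c1 c2) = pairC (cor j) \<mu>0 - (c1 * of_int (A j i) + c2 * of_int (A j k))"
  unfolding G_def by (simp add: pairC_diff pairC_add pairC_scale ApairC)

lemma refl_G_k: "refl_map cor rt k (G i k \<mu>0 c1 c2) = G i k \<mu>0 c1 (c2 + pairC (cor k) (G i k \<mu>0 c1 c2))"
  unfolding refl_map_def[of _ _ k "G i k \<mu>0 c1 c2"]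
  by (simp only: G_def[of i k \<mu>0 c1 "c2 + _"]) (simp add: G_def algebra_simps)

lemma refl_G_i: "refl_map cor rt i (G i k \<mu>0 c1 c2) = G i k \<mu>0 (c1 + pairC (cor i) (G i k \<mu>0 c1 c2)) c2"
  unfolding refl_map_def[of _ _ i "G i k \<mu>0 c1 c2"]
  by (simp only: G_def[of i k \<mu>0 "c1 + _"]) (simp add: G_def algebra_simps)

lemma pow_G: assumes "A i i = 2" "A k k = 2"
  shows "((refl_map cor rt i \<circ> refl_map cor rt k) ^^ n) (G i k \<mu>0 c1 c2)
     = G i k \<mu>0 (fst ((stp (pairC (cor i) \<mu>0) (pairC (cor k) \<mu>0) (of_int (A i k)) (of_int (A k i)) ^^ n) (c1,c2)))
                (snd ((stp (pairC (cor i) \<mu>0) (pairC (cor k) \<mu>0) (of_int (A i k)) (of_int (A k i)) ^^ n) (c1,c2)))"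
proof -
  define F where "F = refl_map cor rt i \<circ> refl_map cor rt k"
  define S where "S = stp (pairC (cor i) \<mu>0) (pairC (cor k) \<mu>0) (of_int (A i k)) (of_int (A k i))"
  have Fx: "F x = refl_map cor rt i (refl_map cor rt k x)" for x by (simp add: F_def)
  have step: "F (G i k \<mu>0 c1' c2') = G i k \<mu>0 (fst (S (c1',c2'))) (snd (S (c1',c2')))" for c1' c2'
    unfolding Fx refl_G_k refl_G_i pair_G S_def using assms by (simp add: stp_def Let_def algebra_simps)
  have "(F ^^ n) (G i k \<mu>0 c1 c2) = G i k \<mu>0 (fst ((S ^^ n) (c1,c2))) (snd ((S ^^ n) (c1,c2)))"
  proof (induction n)
    case 0 then show ?case by simp
  next
    case (Suc n)
    have "(F ^^ Suc n) (G i k \<mu>0 c1 c2) = F ((F ^^ n) (G i k \<mu>0 c1 c2))" by simp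
    also have "\<dots> = F (G i k \<mu>0 (fst ((S ^^ n) (c1,c2))) (snd ((S ^^ n) (c1,c2))))" by (simp only: Suc.IH)
    also have "\<dots> = G i k \<mu>0 (fst (S ((S ^^ n) (c1,c2)))) (snd (S ((S ^^ n) (c1,c2))))" using step[of "fst ((S ^^ n) (c1,c2))" "snd ((S ^^ n) (c1,c2))"] by simp
    finally show ?case by simp
  qed
  then show ?thesis unfolding F_def S_def .
qed

lemma pow_psp: assumes "A i i = 2" "A k k = 2"
  shows "(pairC (cor i) (((refl_map cor rt i \<circ> refl_map cor rt k) ^^ n) \<mu>), pairC (cor k) (((refl_map cor rt i \<circ> refl_map cor rt k) ^^ n) \<mu>))
     = (psp (of_int (A i k)) (of_int (A k i)) ^^ n) (pairC (cor i) \<mu>, pairC (cor k) \<mu>)"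
proof -
  define F where "F = refl_map cor rt i \<circ> refl_map cor rt k"
  define S where "S = psp (of_int (A i k)) (of_int (A k i))"
  have step: "(pairC (cor i) (F x), pairC (cor k) (F x)) = S (pairC (cor i) x, pairC (cor k) x)" for x
    using assms by (simp add: F_def S_def pairC_refl psp_def Let_def)
  have "(pairC (cor i) ((F ^^ n) \<mu>), pairC (cor k) ((F ^^ n) \<mu>)) = (S ^^ n) (pairC (cor i) \<mu>, pairC (cor k) \<mu>)"
  proof (induction n)
    case 0 then show ?case by simp
  next
    case (Suc n)
    have "(pairC (cor i) ((F ^^ Suc n) \<mu>), pairC (cor k) ((F ^^ Suc n) \<mu>)) = S (pairC (cor i) ((F ^^ n) \<mu>), pairC (cor k) ((F ^^ n) \<mu>))"
      using step[of "(F ^^ n) \<mu>"] by simp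
    then show ?case using Suc.IH by simp
  qed
  then show ?thesis unfolding F_def S_def .
qed

lemma order_lemma:
  assumes "A i i = 2" "A k k = 2" "0 < m"
    and st: "\<And>X0 Y0. (stp X0 Y0 (of_int (A i k)) (of_int (A k i)) ^^ m) (0,0) = (0,0)"
    and ps: "\<And>j. 0 < j \<Longrightarrow> j < m \<Longrightarrow> (psp (of_int (A i k)) (of_int (A k i)) ^^ j) (2, of_int (A k i)) \<noteq> (2, of_int (A k i))"
  shows "has_order cor rt i k m"
  unfolding has_order_def
proof (intro conjI allI impI)
  show "0 < m" by fact
  show "(refl_map cor rt i \<circ> refl_map cor rt k) ^^ m = id"
  proof
    fix \<mu>0
    have g: "G i k \<mu>0 0 0 = \<mu>0" by (simp add: G_def)
    show "((refl_map cor rt i \<circ> refl_map cor rt k) ^^ m) \<mu>0 = id \<mu>0"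
      using pow_G[OF assms(1,2), of m \<mu>0 0 0] st g by simp
  qed
next
  fix j assume j: "0 < j \<and> j < m"
  show "(refl_map cor rt i \<circ> refl_map cor rt k) ^^ j \<noteq> id"
  proof
    assume idj: "(refl_map cor rt i \<circ> refl_map cor rt k) ^^ j = id"
    let ?a = "\<lambda>b. (of_int (rt i b) :: complex)"
    have "pairC (cor i) ?a = 2" "pairC (cor k) ?a = of_int (A k i)" using assms by (simp_all add: ApairC)
    then show False using pow_psp[OF assms(1,2), of j ?a] idj ps[of j] j by simp
  qed
qed

lemma has_order_small: assumes "A i i = 2" "A k k = 2" "A i k * A k i < 4" "i \<noteq> k"
  shows "has_order cor rt i k (mp (A i k * A k i))"
proof -
  have c: "(A i k, A k i) \<in> {(0,0),(-1,-1),(-1,-2),(-2,-1),(-1,-3),(-3,-1)}"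
    using small_cases[of "A i k" "A k i"] assms Asym0 Aoff[of i k] Aoff[of k i] by auto
  have lt6: "\<And>j::nat. j < 6 \<Longrightarrow> j \<in> {0,1,2,3,4,5}" by auto
  show ?thesis
  proof (rule order_lemma[OF assms(1,2)])
    show "0 < mp (A i k * A k i)" by (simp add: mp_def)
  next
    fix X0 Y0
    show "(stp X0 Y0 (of_int (A i k)) (of_int (A k i)) ^^ mp (A i k * A k i)) (0,0) = (0,0)"
      using c by (auto simp: mp_def numeral_eq_Suc stp_def Let_def algebra_simps)
  next
    fix j :: nat assume j: "0 < j" "j < mp (A i k * A k i)"
    have "j < 6" using j by (auto simp: mp_def split: if_splits)
    then have "j \<in> {0,1,2,3,4,5}" by auto
    then show "(psp (of_int (A i k)) (of_int (A k i)) ^^ j) (2, of_int (A k i)) \<noteq> (2, of_int (A k i))"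
      using c j by (auto simp: mp_def numeral_eq_Suc psp_def Let_def algebra_simps)
  qed
qed

end


context BKM begin

lemma W_sq: "A s s = 2 \<Longrightarrow> W_eq A cor rt (x @ s # s # y) (x @ y)"
  using W_eq_cong[OF W_eq_rel[OF W_rel.sq[of A s cor rt]], of x y] by simp

lemma r_sq: "A k k = 2 \<Longrightarrow> r k (r k \<mu>) = \<mu>"
  using act_sound[OF W_eq_rel[OF W_rel.sq[of A k cor rt]], of \<mu>] by simp

lemma rev_cancel: "(\<forall>s\<in>set z. A s s = 2) \<Longrightarrow> W_eq A cor rt (z @ rev z) []"
proof (induction z)
  case Nil then show ?case by (simp add: W_eq.refl)
next
  case (Cons s z)
  have "W_eq A cor rt ([s] @ (z @ rev z) @ [s]) ([s] @ [] @ [s])"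
    using Cons by (intro W_eq_cong) auto
  moreover have "W_eq A cor rt ([] @ s # s # []) ([] @ [])" using Cons by (intro W_sq) auto
  ultimately show ?case by (auto intro: W_eq.trans)
qed

lemma braid_alt: assumes "i \<noteq> k" "A i i = 2" "A k k = 2" "m \<in> {2,3,4,6}" "has_order cor rt i k m"
  shows "W_eq A cor rt (alt k i m) (alt i k m)"
proof -
  have h: "W_eq A cor rt (alt k i (m+m)) []"
    using W_eq_rel[OF W_rel.braid2[where i=i and j=k and A=A and cor=cor and rt=rt and m=m, OF assms]] by (simp add: concat_rep_alt mult_2)
  define z where "z = (if even m then alt k i m else alt i k m)"
  have split: "alt k i (m+m) = alt k i m @ z" by (simp add: alt_add z_def)
  have "set z \<subseteq> {k,i}" unfolding z_def using alt_set[of k i m] alt_set[of i k m] by auto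
  then have zr: "\<forall>s\<in>set z. A s s = 2" using assms(2,3) by auto
  have "W_eq A cor rt (alt k i m @ (z @ rev z)) (alt k i m @ [])"
    by (rule W_eq_app[OF rev_cancel[OF zr]])
  then have 1: "W_eq A cor rt (alt k i m) ((alt k i m @ z) @ rev z)" by (simp add: W_eq.sym)
  have 2: "W_eq A cor rt ((alt k i m @ z) @ rev z) ([] @ rev z)"
    by (rule W_eq_appr) (use h split in simp)
  have 3: "rev z = alt i k m" unfolding z_def by (simp add: rev_alt)
  show ?thesis using W_eq.trans[OF 1 2] 3 by simp
qed

lemma exch_dihedral: assumes "i \<noteq> k" "A i i = 2" "A k k = 2" "m \<in> {2,3,4,6}" "has_order cor rt i k m" "m \<le> L"
  shows "\<exists>t. W_eq A cor rt (alt k i L) (i # t) \<and> length t = L - 1"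
proof -
  have e: "alt k i L = alt k i m @ (if even m then alt k i (L-m) else alt i k (L-m))"
    using alt_add[of k i m "L-m"] assms(6) by simp
  obtain m' where m': "m = Suc m'" using assms(4) by (cases m) auto
  have "W_eq A cor rt (alt k i L) (alt i k m @ (if even m then alt k i (L-m) else alt i k (L-m)))"
    unfolding e by (rule W_eq_appr[OF braid_alt[OF assms(1-5)]])
  then show ?thesis using assms(6) m' by (intro exI[of _ "alt k i m' @ (if even m then alt k i (L-m) else alt i k (L-m))"]) auto
qed

lemma dihedral_key: assumes "i \<noteq> k" "A i i = 2" "A k k = 2" "pr i \<nu> \<ge> 0" "pr k \<nu> \<ge> 0"
  "pr i (act (alt k i L) \<nu>) < 0"
  shows "\<exists>t. W_eq A cor rt (alt k i L) (i # t) \<and> length t = L - 1"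
proof -
  let ?a = "A i k" and ?b = "A k i"
  have ab: "?a \<le> 0" "?b \<le> 0" using Aoff assms(1) by auto
  have neg: "fst (pq ?a ?b L) < 0 \<or> snd (pq ?a ?b L) < 0"
  proof (rule ccontr)
    assume "\<not> ?thesis"
    then have "0 \<le> fst (pq ?a ?b L) * pr i \<nu>" "0 \<le> snd (pq ?a ?b L) * pr k \<nu>" using assms(4,5) by auto
    then show False using assms(6) alt_pair[OF assms(2,3), of L \<nu>] by simp
  qed
  show ?thesis
  proof (cases "?a * ?b \<ge> 4")
    case True then show ?thesis using pq_pos4[OF ab True, of L] neg by auto
  next
    case False
    then have lt: "?a * ?b < 4" by simp
    have z: "?a = 0 \<longleftrightarrow> ?b = 0" using Asym0 by simp
    have L: "mp (?a * ?b) \<le> L" using pq_small[OF ab lt z, of L] neg by (meson not_le)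
    have mm: "mp (?a * ?b) \<in> {2,3,4,6}" by (simp add: mp_def)
    show ?thesis by (rule exch_dihedral[OF assms(1-3) mm has_order_small[OF assms(2,3) lt assms(1)] L])
  qed
qed

lemma alt_last: "alt k i (Suc L') = alt k i L' @ [if odd (Suc L') then k else i]"
  by (simp only: alt_Suc_right) simp

lemma helper:
  assumes IHE: "\<forall>y. length y < n \<longrightarrow> (\<forall>j. A j j = 2 \<longrightarrow> pr j (act y lam) < 0 \<longrightarrow> (\<exists>y'. W_eq A cor rt y (j#y') \<and> length y' < length y))"
    and ii: "A i i = 2" and kk: "A k k = 2" and ik: "i \<noteq> k"
  shows "\<forall>u L v. length u = m \<longrightarrow> W_eq A cor rt v (alt k i L @ u) \<longrightarrow> 1 \<le> L \<longrightarrow> L + length u \<le> length v \<longrightarrow> length v \<le> n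
     \<longrightarrow> pr i (act v lam) < 0 \<longrightarrow> (\<exists>v'. W_eq A cor rt v (i#v') \<and> length v' < length v)"
proof (induction m rule: less_induct)
  case (less m)
  show ?case
  proof (intro allI impI)
    fix u L v
    assume lu: "length u = m" and veq: "W_eq A cor rt v (alt k i L @ u)" and L1: "1 \<le> L"
      and len: "L + length u \<le> length v" and vn: "length v \<le> n" and neg: "pr i (act v lam) < 0"
    define \<nu> where "\<nu> = act u lam"
    have actv: "act v lam = act (alt k i L) \<nu>" using act_sound[OF veq] by (simp add: wZ_append \<nu>_def)
    obtain L' where L': "L = Suc L'" using L1 by (cases L) auto
    define t where "t = (if odd L then k else i)"
    define s where "s = (if odd L then i else k)"
    have tt: "A t t = 2" and ss: "A s s = 2" using ii kk by (auto simp: t_def s_def)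
    have lastL: "alt k i L = alt k i L' @ [t]" using alt_last[of k i L'] L' t_def by simp
    have nextL: "alt k i (Suc L) = alt k i L @ [s]" using alt_Suc_right[of k i L] s_def by auto
    have un: "length u < n" using len vn L1 by simp
    show "\<exists>v'. W_eq A cor rt v (i#v') \<and> length v' < length v"
    proof (cases "pr t \<nu> < 0")
      case True
      obtain u' where u': "W_eq A cor rt u (t#u')" "length u' < length u"
        using IHE un tt True unfolding \<nu>_def by blast
      have "W_eq A cor rt (alt k i L @ u) (alt k i L' @ [t] @ t # u')"
        using W_eq_app[OF u'(1), of "alt k i L"] lastL by simp
      moreover have "W_eq A cor rt (alt k i L' @ t # t # u') (alt k i L' @ u')" by (rule W_sq[OF tt])
      ultimately have v2: "W_eq A cor rt v (alt k i L' @ u')" using veq by (auto intro: W_eq.trans)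
      show ?thesis
      proof (cases "L' = 0")
        case True
        then have vu: "W_eq A cor rt v u'" using v2 by simp
        have "pr i (act u' lam) < 0" using neg act_sound[OF vu] by simp
        then obtain u'' where u'': "W_eq A cor rt u' (i#u'')" "length u'' < length u'"
          using IHE[rule_format, of u' i] u'(2) un ii by auto
        show ?thesis using W_eq.trans[OF vu u''(1)] u''(2) u'(2) len by (intro exI[of _ u'']) auto
      next
        case False
        show ?thesis
          using less.IH[of "length u'"] u'(2) lu v2 False len vn neg L' by auto
      qed
    next
      case tnn: False
      show ?thesis
      proof (cases "pr s \<nu> < 0")
        case True
        obtain u' where u': "W_eq A cor rt u (s#u')" "length u' < length u"
          using IHE un ss True unfolding \<nu>_def by blast
        have "W_eq A cor rt (alt k i L @ u) (alt k i L @ [s] @ u')"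
          using W_eq_app[OF u'(1), of "alt k i L"] by simp
        then have v2: "W_eq A cor rt v (alt k i (Suc L) @ u')" using veq nextL by (auto intro: W_eq.trans)
        show ?thesis
          using less.IH[of "length u'", rule_format, where u=u' and L="Suc L" and v=v] u'(2) lu v2 len vn neg by simp
      next
        case False
        have pi: "pr i \<nu> \<ge> 0" and pk: "pr k \<nu> \<ge> 0" using False tnn by (auto simp: s_def t_def split: if_splits)
        obtain tl where tl: "W_eq A cor rt (alt k i L) (i # tl)" "length tl = L - 1"
          using dihedral_key[OF ik ii kk pi pk, of L] neg actv by auto
        have "W_eq A cor rt v (i # (tl @ u))" using W_eq.trans[OF veq W_eq_appr[OF tl(1)]] by simp
        then show ?thesis using tl(2) len L1 by (intro exI[of _ "tl @ u"]) auto
      qed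
    qed
  qed
qed

end


context BKM begin

lemma DE: "below (act v lam) \<and> (\<forall>i. A i i = 2 \<longrightarrow> pr i (act v lam) < 0 \<longrightarrow> (\<exists>v'. W_eq A cor rt v (i#v') \<and> length v' < length v))"
proof (induction "length v" arbitrary: v rule: less_induct)
  case less
  show ?case
  proof (cases v)
    case Nil
    then show ?thesis using below_lam dom by (auto simp: not_less)
  next
    case (Cons k v1)
    have IH1: "below (act v1 lam)" "\<And>i. A i i = 2 \<Longrightarrow> pr i (act v1 lam) < 0 \<Longrightarrow> (\<exists>v'. W_eq A cor rt v1 (i#v') \<and> length v' < length v1)"
      using less[of v1] Cons by auto
    define \<mu> where "\<mu> = act v1 lam"
    have av: "act v lam = r k \<mu>" using Cons \<mu>_def by simp
    have D: "below (act v lam)"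
    proof (cases "pr k \<mu> \<ge> 0")
      case True then show ?thesis using below_step IH1(1) av \<mu>_def by simp
    next
      case False
      then have kk: "A k k = 2" using below_im0 IH1(1) \<mu>_def by fastforce
      obtain v2 where v2: "W_eq A cor rt v1 (k#v2)" "length v2 < length v1" using IH1(2)[OF kk] False \<mu>_def by auto
      have "act v lam = act v2 lam" using av act_sound[OF v2(1), of lam] r_sq[OF kk] \<mu>_def by simp
      then show ?thesis using less[of v2] v2(2) Cons by simp
    qed
    have E: "\<forall>i. A i i = 2 \<longrightarrow> pr i (act v lam) < 0 \<longrightarrow> (\<exists>v'. W_eq A cor rt v (i#v') \<and> length v' < length v)"
    proof (intro allI impI)
      fix i assume ii: "A i i = 2" and neg: "pr i (act v lam) < 0"
      show "\<exists>v'. W_eq A cor rt v (i#v') \<and> length v' < length v"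
      proof (cases "k = i")
        case True then show ?thesis using Cons by (intro exI[of _ v1]) (auto intro: W_eq.refl)
      next
        case ki: False
        show ?thesis
        proof (cases "A k k = 2")
          case kk: True
          have IHE: "\<forall>y. length y < length v \<longrightarrow> (\<forall>j. A j j = 2 \<longrightarrow> pr j (act y lam) < 0 \<longrightarrow> (\<exists>y'. W_eq A cor rt y (j#y') \<and> length y' < length y))"
            using less by blast
          have "W_eq A cor rt v (alt k i 1 @ v1)" using Cons by (simp add: W_eq.refl)
          then show ?thesis
            using helper[OF IHE ii kk ki[symmetric], rule_format, where u=v1 and L=1 and v=v] neg Cons by simp
        next
          case kim: False
          have pk: "pr k \<mu> \<ge> 0" using below_im0 IH1(1) kim \<mu>_def by simp
          have aik: "A i k \<le> 0" using Aoff ki by simp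
          have "pr i \<mu> - pr k \<mu> * A i k < 0" using neg av pr_r by simp
          moreover have "pr k \<mu> * A i k \<le> 0" using pk aik by (simp add: mult_nonneg_nonpos)
          ultimately have pin: "pr i \<mu> < 0" by simp
          obtain v2 where v2: "W_eq A cor rt v1 (i#v2)" "length v2 < length v1" using IH1(2)[OF ii] pin \<mu>_def by auto
          show ?thesis
          proof (cases "A i k = 0")
            case True
            then have "A k i = 0" using Asym0 by simp
            then have c: "W_eq A cor rt ([] @ [k,i] @ v2) ([] @ [i,k] @ v2)"
              by (intro W_eq_cong W_eq_rel W_rel.comm) (use kim ki in auto)
            have "W_eq A cor rt v (k#i#v2)" using Cons W_eq_cons[OF v2(1)] by simp
            then have "W_eq A cor rt v (i#k#v2)" using c by (auto intro: W_eq.trans)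
            then show ?thesis using v2(2) Cons by (intro exI[of _ "k#v2"]) auto
          next
            case False
            then have a1: "A i k \<le> -1" using aik by simp
            have b1: "A k i \<le> -1" using False Asym0[of i k] Aoff[of k i] ki by simp
            define \<nu> where "\<nu> = act v2 lam"
            have bn: "below \<nu>" using less[of v2] v2(2) Cons \<nu>_def by simp
            have pkn: "pr k \<nu> \<ge> 0" using below_im0[OF bn kim] .
            have mu: "\<mu> = r i \<nu>" using act_sound[OF v2(1), of lam] \<mu>_def \<nu>_def by simp
            define X where "X = pr i \<nu>"
            have "pr i \<mu> = - X" using mu ii by (simp add: pr_r X_def)
            then have X0: "X > 0" using pin by simp
            have pkm: "pr k \<mu> = pr k \<nu> - X * A k i" using mu by (simp add: pr_r X_def)
            have ab: "A i k * A k i \<ge> 1"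
            proof -
              have "A i k * (-1) \<le> A i k * A k i" using a1 b1 by (intro mult_left_mono_neg) auto
              then show ?thesis using a1 by simp
            qed
            have h1: "pr k \<nu> * A i k \<le> 0" using pkn aik by (simp add: mult_nonneg_nonpos)
            have h2: "X * (A i k * A k i) \<ge> X" using X0 ab
              by (metis less_imp_le mult.right_neutral mult_left_mono)
            have "- X - (pr k \<nu> - X * A k i) * A i k < 0"
              using \<open>pr i \<mu> - pr k \<mu> * A i k < 0\<close> \<open>pr i \<mu> = - X\<close> pkm by simp
            then have "- X - pr k \<nu> * A i k + X * (A i k * A k i) < 0" by (simp add: algebra_simps)
            then show ?thesis using h1 h2 by linarith
          qed
        qed
      qed
    qed
    show ?thesis using D E by blast
  qed
qed

lemma stab: "act w lam = lam \<Longrightarrow> \<exists>w'. W_eq A cor rt w w' \<and> set w' \<subseteq> {i. pr i lam = 0}"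
proof (induction "length w" arbitrary: w rule: less_induct)
  case less
  show ?case
  proof (cases w)
    case Nil then show ?thesis by (intro exI[of _ "[]"]) (auto intro: W_eq.refl)
  next
    case (Cons k w1)
    define \<mu> where "\<mu> = act w1 lam"
    have bm: "below \<mu>" using DE \<mu>_def by simp
    have fix': "r k \<mu> = lam" using less.prems Cons \<mu>_def by simp
    show ?thesis
    proof (cases "pr k \<mu> \<ge> 0")
      case True
      have "pr k \<mu> = 0" "\<mu> = lam" using below_fix[OF bm True fix'] by auto
      then have pk: "pr k lam = 0" by simp
      obtain w1' where w1': "W_eq A cor rt w1 w1'" "set w1' \<subseteq> {i. pr i lam = 0}"
        using less.hyps[of w1] Cons \<open>\<mu> = lam\<close> \<mu>_def by auto
      show ?thesis using W_eq_cons[OF w1'(1), of k] w1'(2) pk Cons by (intro exI[of _ "k#w1'"]) auto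
    next
      case False
      then have kk: "A k k = 2" using below_im0 bm by fastforce
      obtain w2 where w2: "W_eq A cor rt w1 (k#w2)" "length w2 < length w1" using DE[of w1] kk False \<mu>_def by auto
      have "act w lam = act w2 lam" using Cons act_sound[OF w2(1), of lam] r_sq[OF kk] by simp
      then have "act w2 lam = lam" using less.prems by simp
      then obtain w2' where w2': "W_eq A cor rt w2 w2'" "set w2' \<subseteq> {i. pr i lam = 0}"
        using less.hyps[of w2] Cons w2(2) by auto
      have "W_eq A cor rt w (k#k#w2)" using Cons W_eq_cons[OF w2(1)] by simp
      moreover have "W_eq A cor rt (k#k#w2) w2" using W_sq[OF kk, of "[]" w2] by simp
      ultimately have "W_eq A cor rt w w2'" using w2'(1) by (blast intro: W_eq.trans)
      then show ?thesis using w2'(2) by blast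
    qed
  qed
qed

lemma stab_conv: "W_eq A cor rt w w' \<Longrightarrow> set w' \<subseteq> {i. pr i lam = 0} \<Longrightarrow> act w lam = lam"
proof -
  assume a: "W_eq A cor rt w w'" "set w' \<subseteq> {i. pr i lam = 0}"
  have "act w' lam = lam" using a(2)
    by (induction w') (auto simp: rZ_def)
  then show ?thesis using act_sound[OF a(1)] by simp
qed

end

theorem lemma2p2p11:
  fixes A :: "'i::countable \<Rightarrow> 'i \<Rightarrow> int"
    and cor rt :: "'i \<Rightarrow> 'b \<Rightarrow> int"
    and lam :: "'b \<Rightarrow> int"
  assumes "BC_matrix A"
    and "is_datum A cor rt"
    and "\<forall>i. pairZ (cor i) lam \<ge> 0"
  shows "{w. word_act cor rt w (of_int \<circ> lam) = of_int \<circ> lam}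
       = {w. \<exists>w'. W_eq A cor rt w w' \<and> set w' \<subseteq> {i. pairZ (cor i) lam = 0}}"
proof -
  interpret BKM A cor rt lam using assms by unfold_locales
  have eq: "word_act cor rt w (of_int \<circ> lam) = of_int \<circ> lam \<longleftrightarrow> wZ cor rt w lam = lam" for w
  proof -
    have "word_act cor rt w (of_int \<circ> lam) = (of_int \<circ> wZ cor rt w lam :: 'b \<Rightarrow> complex)" by (rule word_act_ofint)
    then show ?thesis by (auto simp: fun_eq_iff)
  qed
  show ?thesis
    using stab stab_conv by (auto simp: eq)
qed


end
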